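(* Let $L=2\pi\sqrt{7/3}$ and let $\mathcal A\varphi:=-\varphi'-\varphi'''$ on $D(\mathcal A):=\{\varphi\in H^3(0,L);\ \varphi(0)=\varphi(L)=\varphi'(L)=0\}$, considered on the complex space $L^2(0,L)$. Then \[ \sigma_p(\mathcal A)\cap i\mathbb R=\{\pm iq\},\qquad q=\frac{20}{21\sqrt{21}}, \] and the eigenfunctions of $\mathcal A$ associated with $\lambda=\pm iq$ are exactly $\varphi=C(\varphi_1\mp i\varphi_2)$, $C$ an arbitrary constant, where \[ \varphi_1(x)=\Theta\Big(\cos\tfrac{5x}{\sqrt{21}}-3\cos\tfrac{x}{\sqrt{21}}+2\cos\tfrac{4x}{\sqrt{21}}\Big),\quad \varphi_2(x)=\Theta\Big(-\sin\tfrac{5x}{\sqrt{21}}-3\sin\tfrac{x}{\sqrt{21}}+2\sin\tfrac{4x}{\sqrt{21}}\Big), \] with $\Theta:=\frac{1}{\sqrt{14\pi}}\left(\frac37\right)^{1/4}$.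
   Context: $\sigma_p(\mathcal A)$ denotes the set of eigenvalues of $\mathcal A$. *)

theory Defs
  imports "HOL-Analysis.Analysis"
begin

definition Lc :: real where "Lc = 2 * pi * sqrt (7/3)"

text \<open>Sobolev space H^3(0,L) for complex-valued functions: phi is (the continuous
representative of) an H^3 function on [0,L] with weak derivatives d1, d2, d3
iff d1, d2 are absolutely continuous primitives, d3 is in L^2(0,L), and
phi(x) = phi(0) + int_0^x d1, d1(x) = d1(0) + int_0^x d2, d2(x) = d2(0) + int_0^x d3
for all x in [0,L].\<close>
definition H3_derivs :: "real \<Rightarrow> (real \<Rightarrow> complex) \<Rightarrow> (real \<Rightarrow> complex) \<Rightarrow>
    (real \<Rightarrow> complex) \<Rightarrow> (real \<Rightarrow> complex) \<Rightarrow> bool" where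
  "H3_derivs L \<phi> d1 d2 d3 \<longleftrightarrow>
     set_integrable lborel {0..L} d1 \<and>
     set_integrable lborel {0..L} d2 \<and>
     set_integrable lborel {0..L} d3 \<and>
     set_integrable lborel {0..L} (\<lambda>x. complex_of_real ((cmod (d3 x))\<^sup>2)) \<and>
     (\<forall>x\<in>{0..L}.
        \<phi> x = \<phi> 0 + (LINT t:{0..x}|lborel. d1 t) \<and>
        d1 x = d1 0 + (LINT t:{0..x}|lborel. d2 t) \<and>
        d2 x = d2 0 + (LINT t:{0..x}|lborel. d3 t))"

text \<open>phi is an eigenfunction of A phi = -phi' - phi''' on
D(A) = {phi in H^3(0,L). phi(0) = phi(L) = phi'(L) = 0} with eigenvalue lam:
phi in D(A), phi nonzero (as a continuous function on [0,L]), and A phi = lam phi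
in L^2(0,L), i.e. almost everywhere on (0,L).\<close>
definition eigenfun_A :: "real \<Rightarrow> complex \<Rightarrow> (real \<Rightarrow> complex) \<Rightarrow> bool" where
  "eigenfun_A L lam \<phi> \<longleftrightarrow>
     (\<exists>d1 d2 d3. H3_derivs L \<phi> d1 d2 d3 \<and>
        \<phi> 0 = 0 \<and> \<phi> L = 0 \<and> d1 L = 0 \<and>
        (AE x in lborel. x \<in> {0..L} \<longrightarrow> - d1 x - d3 x = lam * \<phi> x)) \<and>
     (\<exists>x\<in>{0..L}. \<phi> x \<noteq> 0)"

definition point_spectrum_A :: "real \<Rightarrow> complex set" where
  "point_spectrum_A L = {lam. \<exists>\<phi>. eigenfun_A L lam \<phi>}"

definition Theta :: real where
  "Theta = 1 / sqrt (14 * pi) * (3/7) powr (1/4)"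

definition phi1 :: "real \<Rightarrow> real" where
  "phi1 x = Theta * (cos (5*x / sqrt 21) - 3 * cos (x / sqrt 21) + 2 * cos (4*x / sqrt 21))"

definition phi2 :: "real \<Rightarrow> real" where
  "phi2 x = Theta * (- sin (5*x / sqrt 21) - 3 * sin (x / sqrt 21) + 2 * sin (4*x / sqrt 21))"

definition qc :: real where "qc = 20 / (21 * sqrt 21)"

end

theory Submission
  imports Defs "HOL-Computational_Algebra.Fundamental_Theorem_Algebra"
begin


definition reg_sol :: "real \<Rightarrow> complex \<Rightarrow> (real \<Rightarrow> complex) \<Rightarrow> (real \<Rightarrow> complex) \<Rightarrow> (real \<Rightarrow> complex) \<Rightarrow> bool" where
 "reg_sol L lam \<phi> f1 f2 \<longleftrightarrow> (\<forall>x\<in>{0..L}. (\<phi> has_vector_derivative f1 x) (at x within {0..L}) \<and>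
    (f1 has_vector_derivative f2 x) (at x within {0..L}) \<and>
    (f2 has_vector_derivative (- f1 x - lam * \<phi> x)) (at x within {0..L}))"

lemma indef_cont:
  fixes f :: "real \<Rightarrow> complex"
  assumes "set_integrable lborel {0..L} f"
    and "\<forall>x\<in>{0..L}. g x = c + (LINT t:{0..x}|lborel. f t)"
  shows "continuous_on {0..L} g" "\<And>x. x \<in> {0..L} \<Longrightarrow> g x = c + integral {0..x} f"
proof -
  show eq: "g x = c + integral {0..x} f" if "x \<in> {0..L}" for x
  proof -
    have "set_integrable lborel {0..x} f"
      by (rule set_integrable_subset[OF assms(1)]) (use that in auto)
    then show ?thesis using assms(2) that set_borel_integral_eq_integral(2) by metis
  qed
  have "f integrable_on {0..L}" using set_borel_integral_eq_integral(1)[OF assms(1)] .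
  then have "continuous_on {0..L} (\<lambda>x. c + integral {0..x} f)"
    by (intro continuous_intros indefinite_integral_continuous_1)
  then show "continuous_on {0..L} g"
    by (rule continuous_on_cong[THEN iffD1, rotated 2]) (auto simp: eq)
qed

lemma deriv_from_int:
  fixes f :: "real \<Rightarrow> complex"
  assumes "continuous_on {0..L} f"
    and "\<And>x. x \<in> {0..L} \<Longrightarrow> g x = c + (LINT t:{0..x}|lborel. f t)"
    and "x \<in> {0..L}"
  shows "(g has_vector_derivative f x) (at x within {0..L})"
proof -
  have eq: "g y = c + integral {0..y} f" if "y \<in> {0..L}" for y
  proof -
    have "set_integrable lborel {0..y} f"
      by (rule borel_integrable_atLeastAtMost') (rule continuous_on_subset[OF assms(1)], use that in auto)
    then show ?thesis using assms(2) that set_borel_integral_eq_integral(2) by metis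
  qed
  have "((\<lambda>u. c + integral {0..u} f) has_vector_derivative f x) (at x within {0..L})"
    using has_vector_derivative_add[OF has_vector_derivative_const integral_has_vector_derivative[OF assms(1,3)], of c] by simp
  then show ?thesis
    by (rule has_vector_derivative_transform[OF assms(3), rotated]) (simp add: eq)
qed

lemma regularity:
  assumes "eigenfun_A L lam \<phi>"
  shows "\<exists>f1 f2. reg_sol L lam \<phi> f1 f2 \<and> \<phi> 0 = 0 \<and> \<phi> L = 0 \<and> f1 L = 0 \<and> (\<exists>x\<in>{0..L}. \<phi> x \<noteq> 0)"
proof -
  obtain d1 d2 d3 where H: "H3_derivs L \<phi> d1 d2 d3" and b: "\<phi> 0 = 0" "\<phi> L = 0" "d1 L = 0"
    and ae: "AE x in lborel. x \<in> {0..L} \<longrightarrow> - d1 x - d3 x = lam * \<phi> x"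
    and nz: "\<exists>x\<in>{0..L}. \<phi> x \<noteq> 0"
    using assms unfolding eigenfun_A_def by blast
  note H = H[unfolded H3_derivs_def]
  have i1: "set_integrable lborel {0..L} d1" using H by (rule conjunct1)
  have i2: "set_integrable lborel {0..L} d2" using H[THEN conjunct2] by (rule conjunct1)
  have i3: "set_integrable lborel {0..L} d3" using H[THEN conjunct2, THEN conjunct2] by (rule conjunct1)
  have all: "\<forall>x\<in>{0..L}. \<phi> x = \<phi> 0 + (LINT t:{0..x}|lborel. d1 t) \<and>
        d1 x = d1 0 + (LINT t:{0..x}|lborel. d2 t) \<and>
        d2 x = d2 0 + (LINT t:{0..x}|lborel. d3 t)"
    using H[THEN conjunct2, THEN conjunct2, THEN conjunct2, THEN conjunct2] .
  have e0: "\<forall>x\<in>{0..L}. \<phi> x = \<phi> 0 + (LINT t:{0..x}|lborel. d1 t)"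
    and e1: "\<forall>x\<in>{0..L}. d1 x = d1 0 + (LINT t:{0..x}|lborel. d2 t)"
    and e2: "\<forall>x\<in>{0..L}. d2 x = d2 0 + (LINT t:{0..x}|lborel. d3 t)" using all by blast+
  have c\<phi>: "continuous_on {0..L} \<phi>" using indef_cont(1)[OF i1 e0] .
  have c1: "continuous_on {0..L} d1" using indef_cont(1)[OF i2 e1] .
  define g where "g t = - d1 t - lam * \<phi> t" for t
  have cg: "continuous_on {0..L} g" unfolding g_def by (intro continuous_intros c1 c\<phi>)
  have d2eq: "d2 x = d2 0 + (LINT t:{0..x}|lborel. g t)" if x: "x \<in> {0..L}" for x
  proof -
    have "(LINT t:{0..x}|lborel. d3 t) = (LINT t:{0..x}|lborel. g t)"
      unfolding set_lebesgue_integral_def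
    proof (rule integral_cong_AE)
      have "set_integrable lborel {0..x} d3"
        by (rule set_integrable_subset[OF i3]) (use x in auto)
      then show "(\<lambda>t. indicator {0..x} t *\<^sub>R d3 t) \<in> borel_measurable lborel"
        unfolding set_integrable_def by auto
      have "set_integrable lborel {0..x} g"
        by (rule borel_integrable_atLeastAtMost') (rule continuous_on_subset[OF cg], use x in auto)
      then show "(\<lambda>t. indicator {0..x} t *\<^sub>R g t) \<in> borel_measurable lborel"
        unfolding set_integrable_def by auto
      show "AE t in lborel. indicator {0..x} t *\<^sub>R d3 t = indicator {0..x} t *\<^sub>R g t"
        using ae by eventually_elim (use x in \<open>auto simp: g_def indicator_def algebra_simps\<close>)
    qed
    moreover have "d2 x = d2 0 + (LINT t:{0..x}|lborel. d3 t)" using e2 x by blast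
    ultimately show ?thesis by simp
  qed
  have c2: "continuous_on {0..L} d2" using indef_cont(1)[OF i3 e2] .
  have "reg_sol L lam \<phi> d1 d2"
    unfolding reg_sol_def
  proof (intro ballI conjI)
    fix x assume x: "x \<in> {0..L}"
    show "(\<phi> has_vector_derivative d1 x) (at x within {0..L})"
      by (rule deriv_from_int[OF c1 _ x, of _ "\<phi> 0"]) (use e0 in blast)
    show "(d1 has_vector_derivative d2 x) (at x within {0..L})"
      by (rule deriv_from_int[OF c2 _ x, of _ "d1 0"]) (use e1 in blast)
    show "(d2 has_vector_derivative (- d1 x - lam * \<phi> x)) (at x within {0..L})"
      using deriv_from_int[OF cg d2eq x] by (simp add: g_def)
  qed
  then show ?thesis using b nz by blast
qed



lemma exp_vd: "((\<lambda>x. exp (s * complex_of_real x)) has_vector_derivative s * exp (s * complex_of_real x)) (at x within S)"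
proof -
  have "((\<lambda>z. exp (s*z)) has_field_derivative s * exp (s * complex_of_real x)) (at (complex_of_real x))"
    by (auto intro!: derivative_eq_intros)
  then show ?thesis by (rule has_vector_derivative_real_field)
qed

lemma const_on:
  fixes g :: "real \<Rightarrow> complex"
  assumes "\<And>x. x \<in> {0..L} \<Longrightarrow> (g has_vector_derivative 0) (at x within {0..L})"
    and "x \<in> {0..L}"
  shows "g x = g 0"
proof -
  obtain k where "\<And>y. y \<in> {0..L} \<Longrightarrow> g y = k"
    using has_vector_derivative_zero_constant[of "{0..L}" g] assms(1) by auto
  then show ?thesis using assms(2) by auto
qed

lemma Q_lemma:
  assumes R: "reg_sol L (\<i> * of_real p) \<phi> f1 f2" and L: "0 \<le> L"
    and b: "\<phi> 0 = 0" "\<phi> L = 0" "f1 L = 0"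
  shows "f1 0 = 0"
proof -
  define Q where "Q x = f2 x * cnj (\<phi> x) + cnj (f2 x) * \<phi> x - f1 x * cnj (f1 x) + \<phi> x * cnj (\<phi> x)" for x
  have Qd: "(Q has_vector_derivative 0) (at x within {0..L})" if x: "x \<in> {0..L}" for x
  proof -
    have d: "(\<phi> has_vector_derivative f1 x) (at x within {0..L})"
      "(f1 has_vector_derivative f2 x) (at x within {0..L})"
      "(f2 has_vector_derivative (- f1 x - \<i> * of_real p * \<phi> x)) (at x within {0..L})"
      using R x unfolding reg_sol_def by auto
    have "(Q has_vector_derivative
      (f2 x * cnj (f1 x) + (- f1 x - \<i> * of_real p * \<phi> x) * cnj (\<phi> x)
       + (cnj (f2 x) * f1 x + cnj (- f1 x - \<i> * of_real p * \<phi> x) * \<phi> x)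
       - (f1 x * cnj (f2 x) + f2 x * cnj (f1 x))
       + (\<phi> x * cnj (f1 x) + f1 x * cnj (\<phi> x)))) (at x within {0..L})"
      unfolding Q_def
      apply (rule has_vector_derivative_add)
       apply (rule has_vector_derivative_diff)
        apply (rule has_vector_derivative_add)
         apply (rule has_vector_derivative_mult, rule d, rule has_vector_derivative_cnj, rule d)
        apply (rule has_vector_derivative_mult, rule has_vector_derivative_cnj, rule d, rule d)
       apply (rule has_vector_derivative_mult, rule d, rule has_vector_derivative_cnj, rule d)
      apply (rule has_vector_derivative_mult, rule d, rule has_vector_derivative_cnj, rule d)
      done
    then show ?thesis
      by (rule has_vector_derivative_eq_rhs) (simp add: algebra_simps)
  qed
  then have "Q L = Q 0" using const_on[of L Q L, OF Qd] L by simp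
  then have "f1 0 * cnj (f1 0) = 0" by (simp add: Q_def b)
  then show ?thesis by simp
qed

lemma G_lemma:
  assumes R: "reg_sol L lam \<phi> f1 f2" and s: "s^3 + s = lam" and x: "x \<in> {0..L}"
  shows "exp (s * of_real x) * (f2 x - s * f1 x + (s^2 + 1) * \<phi> x) = f2 0 - s * f1 0 + (s^2+1) * \<phi> 0"
proof -
  define G where "G x = exp (s * of_real x) * (f2 x - s * f1 x + (s^2 + 1) * \<phi> x)" for x
  have Gd: "(G has_vector_derivative 0) (at y within {0..L})" if y: "y \<in> {0..L}" for y
  proof -
    have d: "(\<phi> has_vector_derivative f1 y) (at y within {0..L})"
      "(f1 has_vector_derivative f2 y) (at y within {0..L})"
      "(f2 has_vector_derivative (- f1 y - lam * \<phi> y)) (at y within {0..L})"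
      using R y unfolding reg_sol_def by auto
    have b: "((\<lambda>x. f2 x - s * f1 x + (s^2 + 1) * \<phi> x) has_vector_derivative
        ((- f1 y - lam * \<phi> y) - s * f2 y + (s^2 + 1) * f1 y)) (at y within {0..L})"
      by (intro has_vector_derivative_add has_vector_derivative_diff has_vector_derivative_mult_right d)
    have "(G has_vector_derivative (exp (s * of_real y) * ((- f1 y - lam * \<phi> y) - s * f2 y + (s^2 + 1) * f1 y)
          + s * exp (s * of_real y) * (f2 y - s * f1 y + (s^2 + 1) * \<phi> y))) (at y within {0..L})"
      unfolding G_def by (rule has_vector_derivative_mult[OF exp_vd b])
    then show ?thesis
      by (rule has_vector_derivative_eq_rhs) (simp add: algebra_simps s[symmetric] power2_eq_square power3_eq_cube)
  qed
  then have "G x = G 0" using const_on[of L G x, OF Gd] x by simp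
  then show ?thesis by (simp add: G_def)
qed

lemma uniq_lemma:
  assumes R: "reg_sol L lam \<phi> f1 f2"
    and z: "\<phi> 0 = 0" "f1 0 = 0" "f2 0 = 0"
    and s: "s1^3 + s1 = lam" "s2^3 + s2 = lam" "s1 \<noteq> s2"
    and x: "x \<in> {0..L}"
  shows "\<phi> x = 0"
proof -
  have br: "f2 y - s1 * f1 y + (s1^2 + 1) * \<phi> y = 0" "f2 y - s2 * f1 y + (s2^2 + 1) * \<phi> y = 0"
    if y: "y \<in> {0..L}" for y
    using G_lemma[OF R s(1) y] G_lemma[OF R s(2) y] z by simp_all
  have f1eq: "f1 y = (s1 + s2) * \<phi> y" if y: "y \<in> {0..L}" for y
  proof -
    have "(s2 - s1) * f1 y = (s2 - s1) * ((s1 + s2) * \<phi> y)"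
    proof -
      have "(s2 - s1) * f1 y - (s2 - s1) * ((s1 + s2) * \<phi> y) = (f2 y - s1 * f1 y + (s1^2 + 1) * \<phi> y) - (f2 y - s2 * f1 y + (s2^2 + 1) * \<phi> y)"
        by (simp add: algebra_simps power2_eq_square)
      then show ?thesis using br[OF y] by simp
    qed
    then show ?thesis using s(3) by simp
  qed
  define K where "K y = exp (- (s1 + s2) * of_real y) * \<phi> y" for y
  have Kd: "(K has_vector_derivative 0) (at y within {0..L})" if y: "y \<in> {0..L}" for y
  proof -
    have d: "(\<phi> has_vector_derivative f1 y) (at y within {0..L})"
      using R y unfolding reg_sol_def by auto
    have "(K has_vector_derivative (exp (- (s1 + s2) * of_real y) * f1 y + (- (s1 + s2)) * exp (- (s1 + s2) * of_real y) * \<phi> y)) (at y within {0..L})"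
      unfolding K_def by (rule has_vector_derivative_mult[OF exp_vd d])
    then show ?thesis
      by (rule has_vector_derivative_eq_rhs) (simp add: f1eq[OF y] algebra_simps)
  qed
  then have "K x = K 0" using const_on[of L K x, OF Kd] x by simp
  then show ?thesis by (simp add: K_def z)
qed



lemma cubic_roots:
  fixes lam :: complex
  obtains a b c where "a^3+a = lam" "b^3+b = lam" "c^3+c = lam" "a+b+c = 0"
    "a*b+b*c+c*a = 1" "a*b*c = lam" "a \<noteq> b \<or> b \<noteq> c"
proof -
  have "\<exists>z. poly [:-lam, 1, 0, 1:] z = 0"
    by (rule fundamental_theorem_of_algebra_alt) auto
  then obtain a where "poly [:-lam, 1, 0, 1:] a = 0" by blast
  then have a: "a^3 + a = lam" by (simp add: algebra_simps power3_eq_cube)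
  define d where "d = csqrt (-3*a^2-4)"
  have d2: "d^2 = -3*a^2-4" unfolding d_def by simp
  define b where "b = (-a+d)/2"
  define c where "c = (-a-d)/2"
  have bc: "b*c = a^2+1" unfolding b_def c_def using d2 by (simp add: field_simps power2_eq_square) 
  have s1: "a+b+c = 0" unfolding b_def c_def by (simp add: field_simps)
  have s2: "a*b+b*c+c*a = 1"
  proof -
    have "a*b+b*c+c*a = a*(b+c) + b*c" by (simp add: algebra_simps)
    also have "b + c = -a" using s1 by (simp add: add_eq_0_iff add.assoc)
    finally show ?thesis using bc by (simp add: power2_eq_square)
  qed
  have s3: "a*b*c = lam" using bc a by (simp add: algebra_simps power2_eq_square power3_eq_cube)
  have quad: "x^2 + a*x + a^2 + 1 = 0" if "x = b \<or> x = c" for x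
  proof -
    have bca: "a = -(b+c)" using s1 eq_neg_iff_add_eq_0 by (metis add.assoc)
    have "x^2 + a*x + a^2 + 1 = x^2 + a*x + b*c" using bc by (simp add: add.assoc)
    also have "\<dots> = x^2 - (b+c)*x + b*c" by (subst bca) (simp add: algebra_simps)
    also have "\<dots> = (x - b) * (x - c)" by (simp add: algebra_simps power2_eq_square)
    finally show ?thesis using that by auto
  qed
  have root: "x^3 + x = lam" if "x = b \<or> x = c" for x
  proof -
    have "x^3 + x - lam = (x - a) * (x^2 + a*x + a^2 + 1)"
      using a by (simp add: algebra_simps power2_eq_square power3_eq_cube)
    then show ?thesis using quad[OF that] by simp
  qed
  have dist: "a \<noteq> b \<or> b \<noteq> c"
  proof (rule ccontr)
    assume "\<not> (a \<noteq> b \<or> b \<noteq> c)"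
    then have "a = b" "b = c" by auto
    then have "d = 0" unfolding b_def c_def by (simp add: field_simps)
    moreover have "a = 0" using \<open>a = b\<close> \<open>d = 0\<close> unfolding b_def by (simp add: field_simps)
    ultimately show False using d2 by simp
  qed
  show ?thesis using that[OF a root root s1 s2 s3 dist] by auto
qed

lemma two_roots:
  fixes lam :: complex
  obtains s1 s2 where "s1^3+s1 = lam" "s2^3+s2 = lam" "s1 \<noteq> s2"
  using cubic_roots[of lam] by metis

lemma int_sols:
  fixes m n :: int
  assumes "m^2 + m*n + n^2 = 7"
  shows "(m+2*n)*(m-n)*(n+2*m) = 20 \<or> (m+2*n)*(m-n)*(n+2*m) = -20"
proof -
  have "(2*m+n)^2 + 3*n^2 = 28" using assms by (simp add: algebra_simps power2_eq_square)
  then have "n^2 \<le> 9" by (smt (verit) zero_le_power2)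
  then have n: "n \<in> {-3..3}" using abs_le_square_iff[of n 3] by (auto simp: abs_le_iff)
  have "(2*n+m)^2 + 3*m^2 = 28" using assms by (simp add: algebra_simps power2_eq_square)
  then have "m^2 \<le> 9" by (smt (verit) zero_le_power2)
  then have m: "m \<in> {-3..3}" using abs_le_square_iff[of m 3] by (auto simp: abs_le_iff)
  have "n \<in> {-3,-2,-1,0,1,2,3}" using n by auto
  moreover have "m \<in> {-3,-2,-1,0,1,2,3}" using m by auto
  ultimately show ?thesis using assms by (auto simp: power2_eq_square)
qed

lemma Lc_eq: "Lc = 2 * pi * sqrt 21 / 3"
proof -
  have "sqrt (7/3) = sqrt 21 / 3"
    by (rule real_sqrt_unique) (auto simp: power_divide)
  then show ?thesis by (simp add: Lc_def)
qed

lemma Lc_pos: "Lc > 0" by (simp add: Lc_eq)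



lemma sqrt21: "sqrt 21 > 0" "(sqrt 21)^2 = 21" "sqrt 21 * sqrt 21 = 21" by auto

lemma spec_sub:
  assumes eig: "eigenfun_A Lc lam \<phi>" and re: "Re lam = 0"
  shows "lam = \<i> * of_real qc \<or> lam = - \<i> * of_real qc"
proof -
  obtain f1 f2 where R: "reg_sol Lc lam \<phi> f1 f2" and bd: "\<phi> 0 = 0" "\<phi> Lc = 0" "f1 Lc = 0"
    and nz: "\<exists>x\<in>{0..Lc}. \<phi> x \<noteq> 0"
    using regularity[OF eig] by blast
  define p where "p = Im lam"
  have lam: "lam = \<i> * of_real p" using re by (simp add: p_def complex_eq_iff)
  have f10: "f1 0 = 0" using Q_lemma[of Lc p \<phi> f1 f2] R lam Lc_pos bd by simp
  have L0: "Lc \<in> {0..Lc}" using Lc_pos by simp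
  have key: "f2 0 = exp (s * of_real Lc) * f2 Lc" if "s^3+s = lam" for s
    using G_lemma[OF R that L0] bd f10 by simp
  obtain a b c where ra: "a^3+a = lam" and rb: "b^3+b = lam" and rc: "c^3+c = lam"
    and s1: "a+b+c = 0" and s2: "a*b+b*c+c*a = 1" and s3: "a*b*c = lam"
    using cubic_roots[of lam] by blast
  have f2L: "f2 Lc \<noteq> 0"
  proof
    assume "f2 Lc = 0"
    then have z: "f2 0 = 0" using key[OF ra] by simp
    obtain t1 t2 where t: "t1^3+t1 = lam" "t2^3+t2 = lam" "t1 \<noteq> t2" using two_roots by metis
    have "\<forall>x\<in>{0..Lc}. \<phi> x = 0" using uniq_lemma[OF R bd(1) f10 z t] by blast
    with nz show False by blast
  qed
  have eab: "exp (a * of_real Lc) = exp (b * of_real Lc)"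
    using key[OF ra] key[OF rb] f2L by simp
  have ebc: "exp (b * of_real Lc) = exp (c * of_real Lc)"
    using key[OF rb] key[OF rc] f2L by simp
  have reeq: "Re x = Re y" if "exp (x * of_real Lc) = exp (y * of_real Lc)" for x y
  proof -
    have "exp (Re x * Lc) = exp (Re y * Lc)"
      using arg_cong[OF that, of norm] by (simp add: norm_exp_eq_Re)
    then show ?thesis using Lc_pos by simp
  qed
  have "Re a + Re b + Re c = 0" using arg_cong[OF s1, of Re] by simp
  then have re0: "Re a = 0" "Re b = 0" "Re c = 0" using reeq[OF eab] reeq[OF ebc] by auto
  define \<alpha> where "\<alpha> = Im a"
  define \<beta> where "\<beta> = Im b"
  define \<gamma> where "\<gamma> = Im c"
  have ai: "a = \<i> * of_real \<alpha>" "b = \<i> * of_real \<beta>" "c = \<i> * of_real \<gamma>"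
    using re0 by (simp_all add: \<alpha>_def \<beta>_def \<gamma>_def complex_eq_iff)
  define r where "r = sqrt 21"
  have r: "r > 0" "r * r = 21" unfolding r_def by auto
  have Lr: "Lc = 2 * pi * r / 3" using Lc_eq r_def by simp
  have diffint: "\<exists>n::int. (x - y) * r = 3 * of_int n"
    if "exp (\<i> * of_real x * of_real Lc) = exp (\<i> * of_real y * of_real Lc)" for x y
  proof -
    have "\<exists>n::int. \<i> * of_real x * of_real Lc = \<i> * of_real y * of_real Lc + of_int (2 * n) * pi * \<i>"
      using that by (simp only: exp_eq)
    then obtain n :: int where nx: "\<i> * of_real x * of_real Lc = \<i> * of_real y * of_real Lc + of_int (2 * n) * pi * \<i>"
      by blast
    have h: "x * Lc = y * Lc + 2 * of_int n * pi"
      using arg_cong[OF nx, of Im] by simp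
    have "(x - y) * (2 * pi * r / 3) = 2 * of_int n * pi" using h[unfolded Lr] by (simp add: algebra_simps)
    then have eq: "(x - y) * (2 * pi * r / 3) = 2 * of_int n * pi" .
    have "(x - y) * r = ((x - y) * (2 * pi * r / 3)) * (3 / (2*pi))" using pi_gt_zero by (simp add: field_simps)
    also have "\<dots> = 2 * of_int n * pi * (3/(2*pi))" using eq by simp
    also have "\<dots> = 3 * of_int n" using pi_gt_zero by (simp add: field_simps)
    finally show ?thesis by blast
  qed
  obtain n :: int where n: "(\<alpha> - \<beta>) * r = 3 * of_int n" using diffint eab ai by auto
  obtain m :: int where m: "(\<beta> - \<gamma>) * r = 3 * of_int m" using diffint ebc ai by auto
  have sum0: "\<alpha> + \<beta> + \<gamma> = 0" using arg_cong[OF s1, of Im] ai by simp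
  have e2: "\<alpha>*\<beta> + \<beta>*\<gamma> + \<gamma>*\<alpha> = -1" using arg_cong[OF s2, of Re] ai by simp
  have "a*b*c = \<i> * of_real \<alpha> * (\<i> * of_real \<beta>) * (\<i> * of_real \<gamma>)" by (simp only: ai)
  also have "\<dots> = - \<i> * of_real (\<alpha>*\<beta>*\<gamma>)"
    by (simp add: algebra_simps)
  finally have "Im lam = - (\<alpha>*\<beta>*\<gamma>)" using s3 by simp
  then have pe: "p = - (\<alpha>*\<beta>*\<gamma>)" by (simp add: p_def)
  define A where "A = \<alpha> * r"
  define B where "B = \<beta> * r"
  define G where "G = \<gamma> * r"
  have l1: "A - B = 3 * of_int n" using n by (simp add: A_def B_def left_diff_distrib)
  have l2: "B - G = 3 * of_int m" using m by (simp add: B_def G_def left_diff_distrib)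
  have "A + B + G = (\<alpha> + \<beta> + \<gamma>) * r" by (simp add: A_def B_def G_def distrib_right)
  then have l3: "A + B + G = 0" using sum0 by simp
  have ABG: "A = of_int m + 2 * of_int n" "B = of_int m - of_int n" "G = - of_int n - 2 * of_int m"
    using l1 l2 l3 by linarith+
  have "A*B + B*G + G*A = (\<alpha>*\<beta> + \<beta>*\<gamma> + \<gamma>*\<alpha>) * (r*r)"
    unfolding A_def B_def G_def by (simp add: algebra_simps)
  then have h21: "A*B + B*G + G*A = -21" using e2 r by simp
  have "A*B + B*G + G*A = -3 * (real_of_int m ^2 + real_of_int m * real_of_int n + real_of_int n ^2)"
    unfolding ABG by (simp add: algebra_simps power2_eq_square)
  then have "real_of_int (m^2 + m*n + n^2) = 7" using h21 by simp
  then have mn: "m^2 + m*n + n^2 = 7" by (simp only: of_int_eq_numeral_iff)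
  have "A*B*G = (\<alpha>*\<beta>*\<gamma>) * (r*r*r)" unfolding A_def B_def G_def by (simp add: algebra_simps)
  also have "\<dots> = (\<alpha>*\<beta>*\<gamma>) * (21*r)" using r by simp
  finally have "p * (21 * r) = - (A*B*G)" using pe by simp
  also have "- (A*B*G) = real_of_int ((m+2*n)*(m-n)*(n+2*m))" unfolding ABG by (simp add: algebra_simps)
  finally have pr: "p * (21 * r) = real_of_int ((m+2*n)*(m-n)*(n+2*m))" .
  have qr: "qc = 20 / (21 * r)" by (simp add: qc_def r_def)
  from int_sols[OF mn] have "p = qc \<or> p = - qc"
  proof
    assume "(m+2*n)*(m-n)*(n+2*m) = 20"
    then have "p * (21 * r) = 20" using pr by simp
    then have "p = 20 / (21 * r)" using r(1) by (simp add: eq_divide_eq)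
    then show ?thesis using qr by simp
  next
    assume "(m+2*n)*(m-n)*(n+2*m) = -20"
    then have "p * (21 * r) = -20" using pr by simp
    then have "-p * (21 * r) = 20" by simp
    then have "-p = 20 / (21 * r)" using r(1) by (simp add: eq_divide_eq)
    then show ?thesis using qr by simp
  qed
  then show ?thesis using lam by auto
qed



definition cw :: "int \<Rightarrow> complex" where "cw \<sigma> = \<i> * of_real (of_int \<sigma> / sqrt 21)"

definition Psi :: "int \<Rightarrow> real \<Rightarrow> complex" where
  "Psi \<sigma> x = exp ((5 * cw \<sigma>) * of_real x) - 3 * exp ((- cw \<sigma>) * of_real x) + 2 * exp ((-4 * cw \<sigma>) * of_real x)"

definition PP :: "int \<Rightarrow> complex \<Rightarrow> nat \<Rightarrow> real \<Rightarrow> complex" where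
  "PP \<sigma> K j x = K * ((5*cw \<sigma>)^j * exp ((5*cw \<sigma>) * of_real x) - 3 * (- cw \<sigma>)^j * exp ((- cw \<sigma>) * of_real x)
      + 2 * (-4 * cw \<sigma>)^j * exp ((-4*cw \<sigma>) * of_real x))"

lemma cw_sq: assumes "\<sigma> = 1 \<or> \<sigma> = -1" shows "cw \<sigma> * cw \<sigma> = - 1/21"
proof -
  define a where "a = of_int \<sigma> / sqrt 21"
  have "cw \<sigma> * cw \<sigma> = (\<i> * \<i>) * (of_real a * of_real a)" unfolding cw_def a_def by (simp only: mult_ac)
  also have "(of_real a * of_real a :: complex) = of_real (a * a)" by (simp only: of_real_mult)
  also have "a * a = 1/21" using assms unfolding a_def by auto
  finally show ?thesis by simp
qed

lemma cw_nz: assumes "\<sigma> = 1 \<or> \<sigma> = -1" shows "cw \<sigma> \<noteq> 0"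
  using assms by (auto simp: cw_def)

lemma lam_eq: assumes "\<sigma> = 1 \<or> \<sigma> = -1"
  shows "\<i> * of_real (of_int \<sigma> * qc) = 20 * cw \<sigma> / 21"
  unfolding cw_def qc_def by (simp add: field_simps)

lemma roots3: assumes "\<sigma> = 1 \<or> \<sigma> = -1"
  shows "(cw \<sigma>)^3 + cw \<sigma> = 20 * cw \<sigma> / 21"
    "(4 * cw \<sigma>)^3 + 4 * cw \<sigma> = 20 * cw \<sigma> / 21"
    "(-5 * cw \<sigma>)^3 + (-5 * cw \<sigma>) = 20 * cw \<sigma> / 21"
proof -
  note sq = cw_sq[OF assms]
  have "(cw \<sigma>)^3 + cw \<sigma> = cw \<sigma> * (cw \<sigma> * cw \<sigma>) + cw \<sigma>" by (simp add: power3_eq_cube)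
  then show "(cw \<sigma>)^3 + cw \<sigma> = 20 * cw \<sigma> / 21" by (simp add: sq field_simps)
  have "(4 * cw \<sigma>)^3 + 4 * cw \<sigma> = 64 * cw \<sigma> * (cw \<sigma> * cw \<sigma>) + 4 * cw \<sigma>" by (simp add: power3_eq_cube)
  then show "(4 * cw \<sigma>)^3 + 4 * cw \<sigma> = 20 * cw \<sigma> / 21" by (simp add: sq field_simps)
  have "(-5 * cw \<sigma>)^3 + (-5 * cw \<sigma>) = -125 * cw \<sigma> * (cw \<sigma> * cw \<sigma>) - 5 * cw \<sigma>" by (simp add: power3_eq_cube)
  then show "(-5 * cw \<sigma>)^3 + (-5 * cw \<sigma>) = 20 * cw \<sigma> / 21" by (simp add: sq field_simps)
qed

lemma conv:
  assumes "\<sigma> = 1 \<or> \<sigma> = -1"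
  shows "of_real (phi1 x) - \<i> * of_int \<sigma> * of_real (phi2 x) = of_real Theta * Psi \<sigma> x"
  using assms
proof
  assume s: "\<sigma> = 1"
  show ?thesis
    by (rule complex_eqI) (simp_all add: s Psi_def cw_def phi1_def phi2_def Re_exp Im_exp algebra_simps)
next
  assume s: "\<sigma> = -1"
  show ?thesis
    by (rule complex_eqI) (simp_all add: s Psi_def cw_def phi1_def phi2_def Re_exp Im_exp algebra_simps)
qed



lemma char_fwd:
  assumes sg: "\<sigma> = 1 \<or> \<sigma> = -1" and eig: "eigenfun_A Lc (\<i> * of_real (of_int \<sigma> * qc)) \<phi>"
  shows "\<exists>B. B \<noteq> 0 \<and> (\<forall>x\<in>{0..Lc}. \<phi> x = B * Psi \<sigma> x)"
proof -
  define lam where "lam = \<i> * of_real (of_int \<sigma> * qc)"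
  define c where "c = cw \<sigma>"
  have lc: "lam = 20 * c / 21" using lam_eq[OF sg] by (simp add: lam_def c_def)
  obtain f1 f2 where R: "reg_sol Lc lam \<phi> f1 f2" and bd: "\<phi> 0 = 0" "\<phi> Lc = 0" "f1 Lc = 0"
    and nz: "\<exists>x\<in>{0..Lc}. \<phi> x \<noteq> 0"
    using regularity[OF eig] unfolding lam_def by blast
  have f10: "f1 0 = 0" using Q_lemma[of Lc "of_int \<sigma> * qc" \<phi> f1 f2] R Lc_pos bd unfolding lam_def by simp
  have r1: "c^3 + c = lam" and r4: "(4*c)^3 + 4*c = lam" and r5: "(-5*c)^3 + (-5*c) = lam"
    unfolding lc c_def by (simp_all only: roots3[OF sg])
  have cnz: "c \<noteq> 0" using cw_nz[OF sg] c_def by simp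
  have sq: "c * c = -1/21" using cw_sq[OF sg] c_def by simp
  have f20: "f2 0 \<noteq> 0"
  proof
    assume z: "f2 0 = 0"
    have "c \<noteq> 4 * c" using cnz by simp
    then have "\<forall>x\<in>{0..Lc}. \<phi> x = 0" using uniq_lemma[OF R bd(1) f10 z r1 r4] by blast
    with nz show False by blast
  qed
  have br: "f2 x - s * f1 x + (s^2 + 1) * \<phi> x = f2 0 * exp (- s * of_real x)"
    if x: "x \<in> {0..Lc}" and s: "s^3 + s = lam" for x s
  proof -
    define W where "W = f2 x - s * f1 x + (s^2 + 1) * \<phi> x"
    have h: "exp (s * of_real x) * W = f2 0"
      using G_lemma[OF R s x] bd f10 unfolding W_def by simp
    have e: "exp (- s * of_real x) * exp (s * of_real x) = 1" by (simp add: exp_add[symmetric])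
    have "W = (exp (- s * of_real x) * exp (s * of_real x)) * W" using e by simp
    also have "\<dots> = exp (- s * of_real x) * (exp (s * of_real x) * W)" by (simp only: mult.assoc)
    also have "\<dots> = exp (- s * of_real x) * f2 0" using h by simp
    finally show ?thesis unfolding W_def by (simp add: mult.commute)
  qed
  have main: "\<phi> x = (- 7 / 18 * f2 0) * Psi \<sigma> x" if x: "x \<in> {0..Lc}" for x
  proof -
    define X where "X = \<phi> x"
    define Y where "Y = f1 x"
    define Z where "Z = f2 x"
    have b1: "Z - c * Y + (c^2 + 1) * X = f2 0 * exp (- c * of_real x)"
      using br[OF x r1] unfolding X_def Y_def Z_def .
    have b4: "Z - (4*c) * Y + ((4*c)^2 + 1) * X = f2 0 * exp (- (4*c) * of_real x)"
      using br[OF x r4] unfolding X_def Y_def Z_def .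
    have b5: "Z - (-5*c) * Y + ((-5*c)^2 + 1) * X = f2 0 * exp (- (-5*c) * of_real x)"
      using br[OF x r5] unfolding X_def Y_def Z_def .
    have id: "21 * (Z - c * Y + (c^2 + 1) * X) - 14 * (Z - (4*c) * Y + ((4*c)^2 + 1) * X)
        - 7 * (Z - (-5*c) * Y + ((-5*c)^2 + 1) * X) = -378 * (c * c) * X"
      by (simp add: algebra_simps power2_eq_square)
    have "18 * X = 21 * (f2 0 * exp (- c * of_real x)) - 14 * (f2 0 * exp (- (4*c) * of_real x))
        - 7 * (f2 0 * exp (- (-5*c) * of_real x))"
      using id unfolding b1 b4 b5 sq by simp
    also have "\<dots> = 18 * ((- 7 / 18 * f2 0) * Psi \<sigma> x)"
      unfolding Psi_def c_def by (simp add: algebra_simps)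
    finally have h18: "18 * X = 18 * ((- 7 / 18 * f2 0) * Psi \<sigma> x)" .
    show ?thesis using mult_cancel_left[THEN iffD1, OF h18] unfolding X_def by simp
  qed
  show ?thesis using main f20 by (intro exI[of _ "- 7 / 18 * f2 0"]) auto
qed



lemma PP_deriv: "(PP \<sigma> K j has_vector_derivative PP \<sigma> K (Suc j) x) (at x within S)"
proof -
  define c where "c = cw \<sigma>"
  have "((\<lambda>x. PP \<sigma> K j x) has_vector_derivative
     K * ((5*c)^j * ((5*c) * exp ((5*c) * of_real x)) - 3 * (- c)^j * ((- c) * exp ((- c) * of_real x))
      + 2 * (-4 * c)^j * ((-4*c) * exp ((-4*c) * of_real x)))) (at x within S)"
    unfolding PP_def c_def[symmetric]
    apply (rule has_vector_derivative_mult_right)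
    apply (rule has_vector_derivative_add)
     apply (rule has_vector_derivative_diff)
      apply (rule has_vector_derivative_mult_right, rule exp_vd)
     apply (rule has_vector_derivative_mult_right, rule exp_vd)
    apply (rule has_vector_derivative_mult_right, rule exp_vd)
    done
  then show ?thesis
    by (rule has_vector_derivative_eq_rhs) (simp add: PP_def c_def algebra_simps)
qed

lemma PP_cont: "continuous_on S (PP \<sigma> K j)"
  by (rule continuous_at_imp_continuous_on)
     (auto intro: has_vector_derivative_continuous[OF PP_deriv[where S=UNIV]])

lemma PP_int:
  assumes "0 \<le> x"
  shows "(LINT t:{0..x}|lborel. PP \<sigma> K (Suc j) t) = PP \<sigma> K j x - PP \<sigma> K j 0"
proof -
  have si: "set_integrable lborel {0..x} (PP \<sigma> K (Suc j))"
    by (rule borel_integrable_atLeastAtMost') (rule PP_cont)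
  have "(PP \<sigma> K (Suc j) has_integral (PP \<sigma> K j x - PP \<sigma> K j 0)) {0..x}"
    by (rule fundamental_theorem_of_calculus[OF assms]) (rule PP_deriv)
  then show ?thesis using set_borel_integral_eq_integral(2)[OF si] integral_unique by metis
qed

lemma cL: "cw \<sigma> * of_real Lc = \<i> * of_real (2 * pi * of_int \<sigma> / 3)"
proof -
  have "cw \<sigma> * of_real Lc = \<i> * (of_real (of_int \<sigma> / sqrt 21) * of_real Lc)" by (simp add: cw_def)
  also have "(of_real (of_int \<sigma> / sqrt 21) * of_real Lc :: complex) = of_real (of_int \<sigma> / sqrt 21 * Lc)"
    by (simp only: of_real_mult)
  also have "of_int \<sigma> / sqrt 21 * Lc = 2 * pi * of_int \<sigma> / 3" by (simp add: Lc_eq)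
  finally show ?thesis .
qed

lemma expL:
  shows "exp ((5 * cw \<sigma>) * of_real Lc) = exp ((- cw \<sigma>) * of_real Lc)"
    "exp ((- cw \<sigma>) * of_real Lc) = exp ((-4 * cw \<sigma>) * of_real Lc)"
proof -
  define T where "T = 2 * pi * of_int \<sigma> / 3"
  have a: "(5 * cw \<sigma>) * of_real Lc = 5 * (\<i> * of_real T)" "(- cw \<sigma>) * of_real Lc = - (\<i> * of_real T)"
    "(-4 * cw \<sigma>) * of_real Lc = -4 * (\<i> * of_real T)"
    using cL[of \<sigma>] unfolding T_def by (simp_all add: mult.assoc)
  show "exp ((5 * cw \<sigma>) * of_real Lc) = exp ((- cw \<sigma>) * of_real Lc)"
    unfolding a exp_eq
    by (rule exI[of _ "2 * \<sigma>"]) (simp add: complex_eq_iff T_def algebra_simps)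
  show "exp ((- cw \<sigma>) * of_real Lc) = exp ((-4 * cw \<sigma>) * of_real Lc)"
    unfolding a exp_eq
    by (rule exI[of _ "\<sigma>"]) (simp add: complex_eq_iff T_def algebra_simps)
qed



lemma cos_facts: "cos (5 * (pi/2)) = 0" "cos (4 * (pi/2)) = 1" "cos (5 * pi / 2) = 0"
proof -
  have "5 * (pi/2) = pi/2 + 2*pi" by simp
  then show "cos (5 * (pi/2)) = 0" by (simp only: cos_periodic cos_pi_half)
  have "4 * (pi/2) = 2*pi" by simp
  then show "cos (4 * (pi/2)) = 1" by simp
  show "cos (5 * pi / 2) = 0" using \<open>cos (5 * (pi/2)) = 0\<close> by simp
qed

lemma Psi_nz:
  assumes sg: "\<sigma> = 1 \<or> \<sigma> = -1"
  shows "Psi \<sigma> (pi * sqrt 21 / 2) \<noteq> 0"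
proof -
  define x0 where "x0 = pi * sqrt 21 / 2"
  define t where "t = of_int \<sigma> * pi / 2"
  have cx: "cw \<sigma> * of_real x0 = \<i> * of_real t"
  proof -
    have "cw \<sigma> * of_real x0 = \<i> * (of_real (of_int \<sigma> / sqrt 21) * of_real x0)" by (simp add: cw_def)
    also have "(of_real (of_int \<sigma> / sqrt 21) * of_real x0 :: complex) = of_real (of_int \<sigma> / sqrt 21 * x0)"
      by (simp only: of_real_mult)
    also have "of_int \<sigma> / sqrt 21 * x0 = t" by (simp add: x0_def t_def)
    finally show ?thesis .
  qed
  have "Psi \<sigma> x0 = exp (\<i> * of_real (5 * t)) - 3 * exp (\<i> * of_real (- t)) + 2 * exp (\<i> * of_real (-4 * t))"
    unfolding Psi_def using cx by (simp add: mult.assoc mult.left_commute)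
  then have "Re (Psi \<sigma> x0) = cos (5 * t) - 3 * cos t + 2 * cos (4 * t)"
    by (simp add: Re_exp)
  also have "\<dots> = 2" using sg
  proof
    assume "\<sigma> = 1" then show ?thesis by (simp add: t_def cos_facts)
  next
    assume "\<sigma> = -1"
    then have "t = - (pi/2)" by (simp add: t_def)
    then show ?thesis by (simp add: cos_facts)
  qed
  finally show ?thesis unfolding x0_def by auto
qed

lemma char_bwd:
  assumes sg: "\<sigma> = 1 \<or> \<sigma> = -1" and K: "K \<noteq> 0" and eq: "\<forall>x\<in>{0..Lc}. \<phi> x = K * Psi \<sigma> x"
  shows "eigenfun_A Lc (\<i> * of_real (of_int \<sigma> * qc)) \<phi>"
proof -
  define lam where "lam = \<i> * of_real (of_int \<sigma> * qc)"
  define c where "c = cw \<sigma>"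
  have lc: "lam = 20 * c / 21" using lam_eq[OF sg] by (simp add: lam_def c_def)
  have r1: "c^3 + c = lam" and r4: "(4*c)^3 + 4*c = lam" and r5: "(-5*c)^3 + (-5*c) = lam"
    unfolding lc c_def by (simp_all only: roots3[OF sg])
  have P0: "PP \<sigma> K 0 x = K * Psi \<sigma> x" for x by (simp add: PP_def Psi_def)
  have L0: "0 \<le> Lc" using Lc_pos by simp
  have \<phi>P: "\<phi> x = PP \<sigma> K 0 x" if "x \<in> {0..Lc}" for x using eq that P0 by simp
  have \<phi>0: "\<phi> 0 = 0" using \<phi>P[of 0] L0 by (simp add: PP_def)
  have "PP \<sigma> K 0 Lc = K * (1 - 3 + 2) * exp ((-4 * c) * of_real Lc)"
    unfolding PP_def c_def[symmetric] expL[of \<sigma>, folded c_def] by (simp add: algebra_simps)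
  then have \<phi>L: "\<phi> Lc = 0" using \<phi>P[of Lc] L0 by simp
  have d1L: "PP \<sigma> K (Suc 0) Lc = 0" 
  proof -
    have "PP \<sigma> K (Suc 0) Lc = K * c * (5 - 3 * (-1) + 2 * (-4)) * exp ((-4 * c) * of_real Lc)"
      unfolding PP_def c_def[symmetric] expL[of \<sigma>, folded c_def] by (simp add: algebra_simps)
    then show ?thesis by simp
  qed
  have z5: "- (5*c) - (5*c)^3 - lam = 0" by (subst r5[symmetric]) (simp add: power3_eq_cube algebra_simps)
  have z1: "- (- c) - (- c)^3 - lam = 0" by (subst r1[symmetric]) (simp add: power3_eq_cube algebra_simps)
  have z4: "- (-4*c) - (-4*c)^3 - lam = 0" by (subst r4[symmetric]) (simp add: power3_eq_cube algebra_simps)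
  have ode: "- PP \<sigma> K (Suc 0) x - PP \<sigma> K (Suc (Suc (Suc 0))) x = lam * PP \<sigma> K 0 x" for x
  proof -
    have "- PP \<sigma> K (Suc 0) x - PP \<sigma> K (Suc (Suc (Suc 0))) x - lam * PP \<sigma> K 0 x =
       K * ((- (5*c) - (5*c)^3 - lam) * exp ((5*c) * of_real x) - 3 * (- (- c) - (- c)^3 - lam) * exp ((- c) * of_real x)
        + 2 * (- (-4*c) - (-4*c)^3 - lam) * exp ((-4*c) * of_real x))"
      unfolding PP_def c_def[symmetric] by (simp add: algebra_simps power3_eq_cube)
    then show ?thesis unfolding z5 z1 z4 by simp
  qed
  have H: "H3_derivs Lc \<phi> (PP \<sigma> K (Suc 0)) (PP \<sigma> K (Suc (Suc 0))) (PP \<sigma> K (Suc (Suc (Suc 0))))"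
    unfolding H3_derivs_def
  proof (intro conjI ballI)
    show "set_integrable lborel {0..Lc} (PP \<sigma> K (Suc 0))"
      by (rule borel_integrable_atLeastAtMost') (rule PP_cont)
    show "set_integrable lborel {0..Lc} (PP \<sigma> K (Suc (Suc 0)))"
      by (rule borel_integrable_atLeastAtMost') (rule PP_cont)
    show "set_integrable lborel {0..Lc} (PP \<sigma> K (Suc (Suc (Suc 0))))"
      by (rule borel_integrable_atLeastAtMost') (rule PP_cont)
    show "set_integrable lborel {0..Lc} (\<lambda>x. complex_of_real ((cmod (PP \<sigma> K (Suc (Suc (Suc 0))) x))\<^sup>2))"
      by (rule borel_integrable_atLeastAtMost') (intro continuous_intros PP_cont)
    fix x assume x: "x \<in> {0..Lc}"
    then have x0: "0 \<le> x" by simp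
    show "\<phi> x = \<phi> 0 + (LINT t:{0..x}|lborel. PP \<sigma> K (Suc 0) t)"
      unfolding PP_int[OF x0] using \<phi>P[OF x] \<phi>P[of 0] L0 by simp
    show "PP \<sigma> K (Suc 0) x = PP \<sigma> K (Suc 0) 0 + (LINT t:{0..x}|lborel. PP \<sigma> K (Suc (Suc 0)) t)"
      unfolding PP_int[OF x0] by simp
    show "PP \<sigma> K (Suc (Suc 0)) x = PP \<sigma> K (Suc (Suc 0)) 0 + (LINT t:{0..x}|lborel. PP \<sigma> K (Suc (Suc (Suc 0))) t)"
      unfolding PP_int[OF x0] by simp
  qed
  have ae: "AE x in lborel. x \<in> {0..Lc} \<longrightarrow> - PP \<sigma> K (Suc 0) x - PP \<sigma> K (Suc (Suc (Suc 0))) x = lam * \<phi> x"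
    by (rule AE_I2) (use ode \<phi>P in auto)
  have x0: "pi * sqrt 21 / 2 \<in> {0..Lc}" by (simp add: Lc_eq)
  have nz: "\<exists>x\<in>{0..Lc}. \<phi> x \<noteq> 0"
    using x0 eq K Psi_nz[OF sg] by auto
  show ?thesis unfolding eigenfun_A_def lam_def[symmetric]
    using H \<phi>0 \<phi>L d1L ae nz by blast
qed



lemma Theta_pos: "Theta > 0" by (simp add: Theta_def)

lemma gen:
  assumes sg: "\<sigma> = 1 \<or> \<sigma> = -1"
  shows "eigenfun_A Lc (\<i> * of_real (of_int \<sigma> * qc)) \<phi> \<longleftrightarrow>
    (\<exists>C::complex. C \<noteq> 0 \<and> (\<forall>x\<in>{0..Lc}. \<phi> x = C * (of_real (phi1 x) - \<i> * of_int \<sigma> * of_real (phi2 x))))"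
proof
  have Tn: "(of_real Theta :: complex) \<noteq> 0" using Theta_pos by simp
  assume "eigenfun_A Lc (\<i> * of_real (of_int \<sigma> * qc)) \<phi>"
  then obtain B where B: "B \<noteq> 0" "\<forall>x\<in>{0..Lc}. \<phi> x = B * Psi \<sigma> x" using char_fwd[OF sg] by blast
  show "\<exists>C::complex. C \<noteq> 0 \<and> (\<forall>x\<in>{0..Lc}. \<phi> x = C * (of_real (phi1 x) - \<i> * of_int \<sigma> * of_real (phi2 x)))"
  proof (intro exI conjI ballI)
    show "B / of_real Theta \<noteq> 0" using B Tn by simp
    fix x assume "x \<in> {0..Lc}"
    then show "\<phi> x = B / of_real Theta * (of_real (phi1 x) - \<i> * of_int \<sigma> * of_real (phi2 x))"
      unfolding conv[OF sg] using B Tn by simp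
  qed
next
  assume "\<exists>C::complex. C \<noteq> 0 \<and> (\<forall>x\<in>{0..Lc}. \<phi> x = C * (of_real (phi1 x) - \<i> * of_int \<sigma> * of_real (phi2 x)))"
  then obtain C where C: "C \<noteq> 0" "\<forall>x\<in>{0..Lc}. \<phi> x = C * (of_real (phi1 x) - \<i> * of_int \<sigma> * of_real (phi2 x))"
    by blast
  have "\<forall>x\<in>{0..Lc}. \<phi> x = (C * of_real Theta) * Psi \<sigma> x" using C(2) unfolding conv[OF sg] by (simp add: mult.assoc)
  moreover have "C * of_real Theta \<noteq> 0" using C(1) Theta_pos by simp
  ultimately show "eigenfun_A Lc (\<i> * of_real (of_int \<sigma> * qc)) \<phi>" using char_bwd[OF sg] by blast
qed

theorem lemma2p3:
  shows "point_spectrum_A Lc \<inter> {z. Re z = 0} = {\<i> * of_real qc, - \<i> * of_real qc} \<and>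
    (\<forall>\<phi>. eigenfun_A Lc (\<i> * of_real qc) \<phi> \<longleftrightarrow>
           (\<exists>C::complex. C \<noteq> 0 \<and>
              (\<forall>x\<in>{0..Lc}. \<phi> x = C * (of_real (phi1 x) - \<i> * of_real (phi2 x))))) \<and>
    (\<forall>\<phi>. eigenfun_A Lc (- \<i> * of_real qc) \<phi> \<longleftrightarrow>
           (\<exists>C::complex. C \<noteq> 0 \<and>
              (\<forall>x\<in>{0..Lc}. \<phi> x = C * (of_real (phi1 x) + \<i> * of_real (phi2 x)))))"
proof (intro conjI allI)
  have l1: "\<i> * of_real (of_int (1::int) * qc) = \<i> * of_real qc" by simp
  have l2: "\<i> * of_real (of_int (-1::int) * qc) = - \<i> * of_real qc" by simp
  have e1: "eigenfun_A Lc (\<i> * of_real qc) (Psi 1)"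
    using char_bwd[of 1 1 "Psi 1"] l1 by simp
  have e2: "eigenfun_A Lc (- \<i> * of_real qc) (Psi (-1))"
    using char_bwd[of "-1" 1 "Psi (-1)"] l2 by simp
  show "point_spectrum_A Lc \<inter> {z. Re z = 0} = {\<i> * of_real qc, - \<i> * of_real qc}"
  proof
    show "point_spectrum_A Lc \<inter> {z. Re z = 0} \<subseteq> {\<i> * of_real qc, - \<i> * of_real qc}"
      using spec_sub unfolding point_spectrum_A_def by blast
    show "{\<i> * of_real qc, - \<i> * of_real qc} \<subseteq> point_spectrum_A Lc \<inter> {z. Re z = 0}"
      using e1 e2 unfolding point_spectrum_A_def by auto
  qed
  fix \<phi>
  show "eigenfun_A Lc (\<i> * of_real qc) \<phi> \<longleftrightarrow>
           (\<exists>C::complex. C \<noteq> 0 \<and> (\<forall>x\<in>{0..Lc}. \<phi> x = C * (of_real (phi1 x) - \<i> * of_real (phi2 x))))"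
    using gen[of 1 \<phi>] l1 by simp
  show "eigenfun_A Lc (- \<i> * of_real qc) \<phi> \<longleftrightarrow>
           (\<exists>C::complex. C \<noteq> 0 \<and> (\<forall>x\<in>{0..Lc}. \<phi> x = C * (of_real (phi1 x) + \<i> * of_real (phi2 x))))"
    using gen[of "-1" \<phi>] l2 by simp
qed

end
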